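(* Let $n\ge 2$ be even. Consider the generalized $n$-gene repressilator system $$\dot r_i = a_i(p_{i-1}) - d_{r_i}(r_i),\qquad \dot p_i = k_i(r_i) - d_{p_i}(p_i),\qquad i=1,\dots,n,$$ (indices mod $n$), with functions satisfying the standing assumptions in the context. Assume: (i) $\lim_{x\to\infty} a_i(x)=0$ for all $i$; (ii) for all $i$, $\delta_i^R > a_i(0)$ and $\delta_i^P > k_i(d_{r_i}^{-1}(a_i(0)))$, where $\delta_i^R:=\lim_{x\to\infty} d_{r_i}(x)$ and $\delta_i^P:=\lim_{x\to\infty} d_{p_i}(x)$ (possibly $+\infty$); (iii) $d_{p_i}'(0)\neq 0$ and $d_{r_i}'(0)\neq 0$ for all $i$. Then the central steady state $E_C$ exists and is a steady state of the system: that is, for each $i$ the fixed-point equation $p_i = f_i\circ f_{i-1}\circ\cdots\circ f_1\circ f_n\circ\cdots\circ f_{i+1}(p_i)$ has a positive solution, and there are such solutions $p_1^*,\dots,p_n^*>0$ for which $$E_C=\big(d_{r_1}^{-1}(a_1(p_n^* )),\,d_{r_2}^{-1}(a_2(p_1^* )),\dots,d_{r_n}^{-1}(a_n(p_{n-1}^* )),\,p_1^*,\dots,p_n^*\big)$$ is a steady state.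
   Context: Standing assumptions: each $a_i:[0,\infty)\to\mathbb{R}$ is $C^1$, nonnegative, strictly decreasing, with $a_i(0)>0$. Each $d_{r_i}, d_{p_i}, k_i:[0,\infty)\to\mathbb{R}$ is $C^1$, vanishes at $0$, and is strictly increasing on $(0,\infty)$. Define $f_i := d_{p_i}^{-1}\circ k_i\circ d_{r_i}^{-1}\circ a_i$ (well defined under assumption (ii)). *)

theory Defs
  imports "HOL-Analysis.Analysis"
begin

text \<open>Genes are indexed 0,...,n-1 (paper: 1,...,n); indices taken mod n.\<close>

definition C1_nonneg :: "(real \<Rightarrow> real) \<Rightarrow> bool" where
  "C1_nonneg g \<longleftrightarrow> (\<exists>g'. continuous_on {0..} g' \<and>
      (\<forall>x\<ge>0. (g has_real_derivative g' x) (at x within {0..})))"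

definition decay_type :: "(real \<Rightarrow> real) \<Rightarrow> bool" where
  "decay_type g \<longleftrightarrow> C1_nonneg g \<and> g 0 = 0 \<and> strict_mono_on {0<..} g"

definition repressor_type :: "(real \<Rightarrow> real) \<Rightarrow> bool" where
  "repressor_type g \<longleftrightarrow> C1_nonneg g \<and> (\<forall>x\<ge>0. g x \<ge> 0)
      \<and> (\<forall>x y. 0 \<le> x \<longrightarrow> x < y \<longrightarrow> g y < g x) \<and> g 0 > 0"

definition inv0 :: "(real \<Rightarrow> real) \<Rightarrow> real \<Rightarrow> real" where
  "inv0 g = inv_into {0..} g"

definition fmap :: "(nat \<Rightarrow> real \<Rightarrow> real) \<Rightarrow> (nat \<Rightarrow> real \<Rightarrow> real) \<Rightarrow>
    (nat \<Rightarrow> real \<Rightarrow> real) \<Rightarrow> (nat \<Rightarrow> real \<Rightarrow> real) \<Rightarrow> nat \<Rightarrow> real \<Rightarrow> real" where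
  "fmap a dr k dp i = inv0 (dp i) \<circ> k i \<circ> inv0 (dr i) \<circ> a i"

text \<open>cyc_chain n f i m = f_{i+m} o ... o f_{i+2} o f_{i+1} (indices mod n);
  with m = n this is f_i o f_{i-1} o ... o f_{i+1}.\<close>
fun cyc_chain :: "nat \<Rightarrow> (nat \<Rightarrow> real \<Rightarrow> real) \<Rightarrow> nat \<Rightarrow> nat \<Rightarrow> real \<Rightarrow> real" where
  "cyc_chain n f i 0 = id"
| "cyc_chain n f i (Suc m) = f ((i + Suc m) mod n) \<circ> cyc_chain n f i m"

definition rep_rhs_r :: "nat \<Rightarrow> (nat \<Rightarrow> real \<Rightarrow> real) \<Rightarrow> (nat \<Rightarrow> real \<Rightarrow> real) \<Rightarrow>
    (nat \<Rightarrow> real) \<Rightarrow> (nat \<Rightarrow> real) \<Rightarrow> nat \<Rightarrow> real" where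
  "rep_rhs_r n a dr r p i = a i (p ((i + n - 1) mod n)) - dr i (r i)"

definition rep_rhs_p :: "(nat \<Rightarrow> real \<Rightarrow> real) \<Rightarrow> (nat \<Rightarrow> real \<Rightarrow> real) \<Rightarrow>
    (nat \<Rightarrow> real) \<Rightarrow> (nat \<Rightarrow> real) \<Rightarrow> nat \<Rightarrow> real" where
  "rep_rhs_p k dp r p i = k i (r i) - dp i (p i)"

definition steady_state where
  "steady_state n a dr k dp r p \<longleftrightarrow>
     (\<forall>i<n. rep_rhs_r n a dr r p i = 0 \<and> rep_rhs_p k dp r p i = 0)"

end

theory Submission
  imports Defs
begin

lemma decay_cont:
  assumes "decay_type g" shows "continuous_on {0..} g"
proof -
  from assms obtain g' where d: "\<forall>x\<ge>0. (g has_real_derivative g' x) (at x within {0..})"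
    unfolding decay_type_def C1_nonneg_def by blast
  show ?thesis unfolding continuous_on_eq_continuous_within
  proof
    fix x :: real assume "x \<in> {0..}"
    then have "(g has_real_derivative g' x) (at x within {0..})" using d by auto
    then show "continuous (at x within {0..}) g" by (rule DERIV_continuous)
  qed
qed

lemma decay_pos:
  assumes "decay_type g" "x > 0" shows "g x > 0"
proof -
  have c: "continuous_on {0..} g" using decay_cont[OF assms(1)] .
  have sm: "strict_mono_on {0<..} g" and g0: "g 0 = 0" using assms(1) unfolding decay_type_def by auto
  have h: "g (x/2) \<ge> 0"
  proof (rule ccontr)
    assume "\<not> g (x/2) \<ge> 0"
    then have e: "- g (x/2) > 0" by simp
    have "continuous (at 0 within {0..}) g" using c
      by (simp add: continuous_on_eq_continuous_within)
    then obtain d where d: "d > 0" "\<forall>t\<in>{0..}. dist t 0 < d \<longrightarrow> dist (g t) (g 0) < - g (x/2)"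
      using e unfolding continuous_within_eps_delta by blast
    define t where "t = min (d/2) (x/4)"
    have t: "t > 0" "t < d" "t < x/2" using d assms(2) unfolding t_def by auto
    have "dist (g t) (g 0) < - g (x/2)" using d(2) t by auto
    then have "g t > g (x/2)" using g0 by (simp add: dist_real_def)
    moreover have "g t < g (x/2)" using sm t assms(2) unfolding strict_mono_on_def by auto
    ultimately show False by simp
  qed
  have "g (x/2) < g x" using sm assms(2) unfolding strict_mono_on_def by auto
  then show ?thesis using h by simp
qed

lemma decay_mono:
  assumes "decay_type g" "0 \<le> x" "x < y" shows "g x < g y"
proof (cases "x = 0")
  case True
  then show ?thesis using decay_pos[OF assms(1)] assms unfolding decay_type_def by auto
next
  case False
  then show ?thesis using assms unfolding decay_type_def strict_mono_on_def by auto
qed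

lemma reach:
  fixes g :: "real \<Rightarrow> real"
  assumes "((\<lambda>x. ereal (g x)) \<longlongrightarrow> \<delta>) at_top" "\<delta> > ereal y"
  shows "\<exists>z\<ge>0. y \<le> g z"
proof -
  have "eventually (\<lambda>x. ereal y < ereal (g x)) at_top"
    using order_tendstoD(1)[OF assms] by simp
  then obtain N where N: "\<forall>x\<ge>N. ereal y < ereal (g x)" unfolding eventually_at_top_linorder by blast
  then have "y < g (max N 0)" by auto
  then show ?thesis by (intro exI[of _ "max N 0"]) auto
qed

lemma decay_inv:
  assumes "decay_type g" "0 \<le> y" "z \<ge> 0" "y \<le> g z"
  shows "inv0 g y \<ge> 0 \<and> g (inv0 g y) = y"
proof -
  have c: "continuous_on {0..z} g" using decay_cont[OF assms(1)]
    by (rule continuous_on_subset) auto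
  have g0: "g 0 = 0" using assms(1) unfolding decay_type_def by auto
  obtain x where x: "0 \<le> x" "x \<le> z" "g x = y"
    using IVT'[of g 0 y z] c assms g0 by auto
  then have "y \<in> g ` {0..}" by auto
  then show ?thesis unfolding inv0_def
    by (metis atLeast_iff f_inv_into_f inv_into_into)
qed

lemma inv0_mono:
  assumes "decay_type g" "0 \<le> y1" "y1 \<le> y2" "z \<ge> 0" "y2 \<le> g z"
  shows "inv0 g y1 \<le> inv0 g y2"
proof (rule ccontr)
  have a1: "inv0 g y1 \<ge> 0 \<and> g (inv0 g y1) = y1" using decay_inv[OF assms(1,2,4)] assms by auto
  have a2: "inv0 g y2 \<ge> 0 \<and> g (inv0 g y2) = y2" using decay_inv[OF assms(1) _ assms(4,5)] assms by auto
  assume "\<not> ?thesis"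
  then have "inv0 g y2 < inv0 g y1" by simp
  then have "g (inv0 g y2) < g (inv0 g y1)" using decay_mono[OF assms(1)] a2 by blast
  then show False using a1 a2 assms by auto
qed

lemma rep_pos:
  assumes "repressor_type a" "0 \<le> x" shows "a x > 0" "a x \<le> a 0"
proof -
  have "a (x+1) < a x" "a (x+1) \<ge> 0" using assms unfolding repressor_type_def by auto
  then show "a x > 0" by simp
  show "a x \<le> a 0" using assms unfolding repressor_type_def
    by (cases "x = 0") (auto simp: less_imp_le)
qed

lemma rep_anti:
  assumes "repressor_type a" "0 \<le> x" "x \<le> y" shows "a y \<le> a x"
  using assms unfolding repressor_type_def
  by (cases "x = y") (auto simp: less_imp_le)

lemma cyc_props:
  fixes f :: "nat \<Rightarrow> real \<Rightarrow> real"
  assumes n: "n > 0"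
    and fpos: "\<forall>i<n. \<forall>x\<ge>0. f i x > 0"
    and fanti: "\<forall>i<n. \<forall>x y. 0 \<le> x \<longrightarrow> x \<le> y \<longrightarrow> f i y \<le> f i x"
  shows "\<forall>x\<ge>0. cyc_chain n f i m x \<ge> 0 \<and> (m > 0 \<longrightarrow> cyc_chain n f i m x > 0)"
    and "\<forall>x y. 0 \<le> x \<longrightarrow> x \<le> y \<longrightarrow>
          (if even m then cyc_chain n f i m x \<le> cyc_chain n f i m y
           else cyc_chain n f i m y \<le> cyc_chain n f i m x)"
proof -
  show P: "\<forall>x\<ge>0. cyc_chain n f i m x \<ge> 0 \<and> (m > 0 \<longrightarrow> cyc_chain n f i m x > 0)" for m
  proof (induction m)
    case 0 then show ?case by simp
  next
    case (Suc m)
    have "(i + Suc m) mod n < n" using n by simp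
    then show ?case using Suc fpos by (auto simp del: mod_Suc intro: less_imp_le)
  qed
  show "\<forall>x y. 0 \<le> x \<longrightarrow> x \<le> y \<longrightarrow>
          (if even m then cyc_chain n f i m x \<le> cyc_chain n f i m y
           else cyc_chain n f i m y \<le> cyc_chain n f i m x)"
  proof (induction m)
    case 0 then show ?case by simp
  next
    case (Suc m)
    have j: "(i + Suc m) mod n < n" using n by simp
    show ?case
    proof (intro allI impI)
      fix x y :: real assume xy: "0 \<le> x" "x \<le> y"
      have cx: "cyc_chain n f i m x \<ge> 0" "cyc_chain n f i m y \<ge> 0" using P xy by auto
      show "if even (Suc m) then cyc_chain n f i (Suc m) x \<le> cyc_chain n f i (Suc m) y
           else cyc_chain n f i (Suc m) y \<le> cyc_chain n f i (Suc m) x"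
      proof (cases "even m")
        case True
        then have "cyc_chain n f i m x \<le> cyc_chain n f i m y" using Suc.IH xy by auto
        then show ?thesis using True fanti j cx by (simp del: mod_Suc)
      next
        case False
        then have "cyc_chain n f i m y \<le> cyc_chain n f i m x" using Suc.IH xy by auto
        then show ?thesis using False fanti j cx by (simp del: mod_Suc)
      qed
    qed
  qed
qed

lemma fixpoint:
  fixes G :: "real \<Rightarrow> real"
  assumes mono: "\<forall>x y. 0 \<le> x \<longrightarrow> x \<le> y \<longrightarrow> G x \<le> G y"
    and bnd: "\<forall>x\<ge>0. 0 \<le> G x \<and> G x \<le> M"
  shows "\<exists>x\<ge>0. G x = x"
proof -
  define S where "S = {x. 0 \<le> x \<and> x \<le> M \<and> x \<le> G x}"
  have M: "0 \<le> M" using bnd by force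
  have 0: "0 \<in> S" using bnd M unfolding S_def by auto
  have bd: "bdd_above S" unfolding S_def bdd_above_def by auto
  define s where "s = Sup S"
  have s0: "0 \<le> s" using cSup_upper[OF 0 bd] s_def by simp
  have "\<And>x. x \<in> S \<Longrightarrow> x \<le> G s"
  proof -
    fix x assume "x \<in> S"
    then have "x \<le> s" "0 \<le> x" "x \<le> G x" using cSup_upper[OF _ bd] s_def S_def by auto
    then show "x \<le> G s" using mono by (meson order_trans)
  qed
  then have sG: "s \<le> G s" using cSup_least[of S] 0 s_def by blast
  then have "G s \<le> G (G s)" using mono s0 by auto
  then have "G s \<in> S" using bnd s0 unfolding S_def by auto
  then have "G s \<le> s" using cSup_upper[OF _ bd] s_def by auto
  then show ?thesis using sG s0 by (intro exI[of _ s]) auto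
qed

lemma chain_eval:
  fixes f :: "nat \<Rightarrow> real \<Rightarrow> real"
  assumes n: "n > 0" and i: "i < n"
    and rel: "\<forall>j<n. p j = f j (p ((j + n - 1) mod n))"
  shows "cyc_chain n f i m (p i) = p ((i + m) mod n)"
proof (induction m)
  case 0 then show ?case using i by simp
next
  case (Suc m)
  define j where "j = (i + Suc m) mod n"
  have j: "j < n" using n j_def by simp
  have "(j + n - 1) mod n = (i + m) mod n"
  proof -
    have "(j + n - 1) mod n = (j + (n - 1)) mod n" using n by simp
    also have "\<dots> = ((i + Suc m) + (n - 1)) mod n" unfolding j_def by (simp add: mod_add_left_eq)
    also have "(i + Suc m) + (n - 1) = (i + m) + n" using n by simp
    finally show ?thesis by simp
  qed
  moreover have "p j = f j (p ((j + n - 1) mod n))" using rel j by blast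
  ultimately have "p j = f j (p ((i + m) mod n))" by simp
  then show ?case using Suc unfolding j_def by (simp del: mod_Suc)
qed

theorem proposition2:
  fixes n :: nat and a dr dp k :: "nat \<Rightarrow> real \<Rightarrow> real"
  assumes "even n" and "n \<ge> 2"
    and "\<forall>i<n. repressor_type (a i)"
    and "\<forall>i<n. decay_type (dr i) \<and> decay_type (dp i) \<and> decay_type (k i)"
    and "\<forall>i<n. (a i \<longlongrightarrow> 0) at_top"
    and "\<forall>i<n. \<exists>\<delta>R::ereal. ((\<lambda>x. ereal (dr i x)) \<longlongrightarrow> \<delta>R) at_top \<and> \<delta>R > ereal (a i 0)"
    and "\<forall>i<n. \<exists>\<delta>P::ereal. ((\<lambda>x. ereal (dp i x)) \<longlongrightarrow> \<delta>P) at_top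
                  \<and> \<delta>P > ereal (k i (inv0 (dr i) (a i 0)))"
    and "\<forall>i<n. \<forall>D. (dp i has_real_derivative D) (at 0 within {0..}) \<longrightarrow> D \<noteq> 0"
    and "\<forall>i<n. \<forall>D. (dr i has_real_derivative D) (at 0 within {0..}) \<longrightarrow> D \<noteq> 0"
  shows "\<exists>p :: nat \<Rightarrow> real.
           (\<forall>i<n. p i > 0 \<and> p i = cyc_chain n (fmap a dr k dp) i n (p i))
         \<and> steady_state n a dr k dp
             (\<lambda>i. inv0 (dr i) (a i (p ((i + n - 1) mod n)))) p"
proof -
  define f where "f = fmap a dr k dp"
  define R where "R i x = inv0 (dr i) (a i x)" for i x
  have n0: "n > 0" using assms(2) by simp
  have Rfacts: "R i x \<ge> 0 \<and> dr i (R i x) = a i x \<and> R i x > 0 \<and> R i x \<le> R i 0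
        \<and> (\<forall>y. x \<le> y \<longrightarrow> R i y \<le> R i x)"
    if i: "i < n" and x: "0 \<le> x" for i x
  proof -
    have ra: "repressor_type (a i)" and dd: "decay_type (dr i)" using assms(3,4) i by auto
    obtain z where z: "z \<ge> 0" "a i 0 \<le> dr i z" using assms(6) i reach by blast
    have ax: "a i x > 0" "a i x \<le> a i 0" using rep_pos[OF ra x] by auto
    have inv: "R i x \<ge> 0 \<and> dr i (R i x) = a i x"
      unfolding R_def using decay_inv[OF dd _ z(1)] z ax by auto
    have "R i x \<noteq> 0" using inv ax dd unfolding decay_type_def by auto
    moreover have "R i x \<le> R i 0" unfolding R_def
      using inv0_mono[OF dd _ ax(2) z] ax by auto
    moreover have "\<forall>y. x \<le> y \<longrightarrow> R i y \<le> R i x"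
    proof (intro allI impI)
      fix y assume "x \<le> y"
      then have "a i y \<le> a i x" "a i y > 0" using rep_anti[OF ra x] rep_pos[OF ra] x by auto
      moreover have "a i x \<le> dr i z" using ax z by linarith
      ultimately show "R i y \<le> R i x" unfolding R_def using inv0_mono[OF dd _ _ z(1)] by auto
    qed
    ultimately show ?thesis using inv by auto
  qed
  have Ffacts: "f i x > 0 \<and> dp i (f i x) = k i (R i x) \<and> (\<forall>y. x \<le> y \<longrightarrow> f i y \<le> f i x)"
    if i: "i < n" and x: "0 \<le> x" for i x
  proof -
    have dd: "decay_type (dp i)" and dk: "decay_type (k i)" using assms(4) i by auto
    obtain z where z: "z \<ge> 0" "k i (inv0 (dr i) (a i 0)) \<le> dp i z" using assms(7) i reach by blast
    have z': "k i (R i 0) \<le> dp i z" using z R_def by simp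
    have kmono: "k i (R i y) \<le> k i (R i x)" if "x \<le> y" for y
    proof -
      have "R i y \<le> R i x" "R i y \<ge> 0" using Rfacts[OF i] x that by auto
      then show ?thesis using decay_mono[OF dk] by (cases "R i y = R i x") (auto intro: less_imp_le)
    qed
    have kpos: "k i (R i y) > 0" if "0 \<le> y" for y
      using decay_pos[OF dk] Rfacts[OF i that] by auto
    have kb: "k i (R i y) \<le> dp i z" if "0 \<le> y" for y
    proof -
      have "R i y \<le> R i 0" "R i y \<ge> 0" using Rfacts[OF i that] by auto
      then have "k i (R i y) \<le> k i (R i 0)"
        using decay_mono[OF dk] by (cases "R i y = R i 0") (auto intro: less_imp_le)
      then show ?thesis using z' by simp
    qed
    have fe: "f i y = inv0 (dp i) (k i (R i y))" for y
      unfolding f_def fmap_def R_def by simp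
    have inv: "f i x \<ge> 0 \<and> dp i (f i x) = k i (R i x)"
      unfolding fe using decay_inv[OF dd _ z(1) kb[OF x]] kpos[OF x] by auto
    have "f i x \<noteq> 0" using inv kpos[OF x] dd unfolding decay_type_def by auto
    moreover have "\<forall>y. x \<le> y \<longrightarrow> f i y \<le> f i x"
    proof (intro allI impI)
      fix y assume "x \<le> y"
      then show "f i y \<le> f i x" unfolding fe
      proof -
        have "0 \<le> k i (R i y)" using kpos[of y] \<open>x \<le> y\<close> x by auto
        then show "inv0 (dp i) (k i (R i y)) \<le> inv0 (dp i) (k i (R i x))"
          using inv0_mono[OF dd _ kmono z(1) kb[OF x]] \<open>x \<le> y\<close> by blast
      qed
    qed
    ultimately show ?thesis using inv by auto
  qed
  have fpos: "\<forall>i<n. \<forall>x\<ge>0. f i x > 0" using Ffacts by auto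
  have fanti: "\<forall>i<n. \<forall>x y. 0 \<le> x \<longrightarrow> x \<le> y \<longrightarrow> f i y \<le> f i x" using Ffacts by auto
  define G where "G = cyc_chain n f (n - 1) n"
  note cp = cyc_props[OF n0 fpos fanti, where i = "n - 1"]
  have Gmono: "\<forall>x y. 0 \<le> x \<longrightarrow> x \<le> y \<longrightarrow> G x \<le> G y"
    using cp(2)[where m = n] assms(1) unfolding G_def by simp
  obtain n' where n': "n = Suc n'" using n0 gr0_implies_Suc by blast
  have Gb: "\<forall>x\<ge>0. 0 \<le> G x \<and> G x \<le> f ((n - 1 + n) mod n) 0"
  proof (intro allI impI)
    fix x :: real assume x: "0 \<le> x"
    have c: "cyc_chain n f (n - 1) n' x \<ge> 0" using cp(1) x by auto
    have G: "G x = f ((n - 1 + n) mod n) (cyc_chain n f (n - 1) n' x)"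
      unfolding G_def using n' by (simp del: mod_Suc)
    have j: "(n - 1 + n) mod n < n" using n0 by simp
    show "0 \<le> G x \<and> G x \<le> f ((n - 1 + n) mod n) 0"
      unfolding G using c fanti fpos j by (meson less_imp_le order_refl)
  qed
  obtain x where x: "x \<ge> 0" "G x = x" using fixpoint[OF Gmono Gb] by blast
  define p where "p j = cyc_chain n f (n - 1) (Suc j) x" for j
  have pnn: "\<forall>j. p j > 0"
  proof
    fix j
    have "\<forall>x\<ge>0. cyc_chain n f (n - 1) (Suc j) x \<ge> 0 \<and> (Suc j > 0 \<longrightarrow> cyc_chain n f (n - 1) (Suc j) x > 0)"
      by (rule cp(1))
    then show "p j > 0" unfolding p_def using x(1) by blast
  qed
  have plast: "p (n - 1) = x" unfolding p_def using x n' G_def by simp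
  have rel: "\<forall>j<n. p j = f j (p ((j + n - 1) mod n))"
  proof (intro allI impI)
    fix j assume j: "j < n"
    show "p j = f j (p ((j + n - 1) mod n))"
    proof (cases j)
      case 0
      have "(n - 1 + Suc 0) mod n = 0" using n0 by simp
      then have "p 0 = f 0 x" unfolding p_def by (simp del: mod_Suc)
      then show ?thesis using 0 plast n0 by simp
    next
      case (Suc j')
      have e1: "(j + n - 1) mod n = j'" using Suc j by simp
      have "n - 1 + Suc j = j + n" using n0 by simp
      then have e2: "(n - 1 + Suc j) mod n = j" using j by simp
      show ?thesis unfolding e1 unfolding p_def using Suc e2 by (simp del: mod_Suc)
    qed
  qed
  have ch: "p i = cyc_chain n f i n (p i)" if "i < n" for i
  proof -
    have "cyc_chain n f i n (p i) = p ((i + n) mod n)"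
      by (rule chain_eval[where f = f and p = p, OF n0 that rel])
    then show ?thesis using that by simp
  qed
  have ss: "steady_state n a dr k dp (\<lambda>i. inv0 (dr i) (a i (p ((i + n - 1) mod n)))) p"
    unfolding steady_state_def rep_rhs_r_def rep_rhs_p_def
  proof (intro allI impI conjI)
    fix i assume i: "i < n"
    let ?q = "p ((i + n - 1) mod n)"
    have q: "?q \<ge> 0" using pnn less_imp_le by blast
    show "a i ?q - dr i (inv0 (dr i) (a i ?q)) = 0" using Rfacts[OF i q] R_def by simp
    have pi: "p i = f i ?q" using rel i by blast
    show "k i (inv0 (dr i) (a i ?q)) - dp i (p i) = 0"
      unfolding pi using Ffacts[OF i q] R_def by simp
  qed
  show ?thesis using pnn ch ss unfolding f_def by blast
qed

end
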